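(* Let $\alpha>0$ and let $f$ be an entire function with $f\in\bigcup_{p\ge 1}F^p_\alpha$. Then $$\lim_{p\to+\infty}\|f\|_{p,\alpha}=\|f\|_{\infty,\alpha}.$$
   Context: For $\alpha>0$ and $0<p<\infty$, $F^p_\alpha$ is the space of entire functions $f$ on $\mathbb{C}$ with $\|f\|_{p,\alpha}=\left[\frac{p\alpha}{2\pi}\int_{\mathbb{C}}|f(z)e^{-\alpha|z|^2/2}|^p\,dA(z)\right]^{1/p}<\infty$, where $dA$ is area measure. $F^\infty_\alpha$ is the space of entire $f$ with $\|f\|_{\infty,\alpha}=\operatorname{ess\,sup}_{z\in\mathbb{C}}|f(z)|e^{-\alpha|z|^2/2}<\infty$. *)

theory Defs
  imports "HOL-Analysis.Analysis" "HOL-Probability.Essential_Supremum"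
begin

definition fock_integral :: "real \<Rightarrow> real \<Rightarrow> (complex \<Rightarrow> complex) \<Rightarrow> ennreal" where
  "fock_integral p \<alpha> f =
     (\<integral>\<^sup>+ z. ennreal ((cmod (f z) * exp (- \<alpha> * (cmod z)\<^sup>2 / 2)) powr p) \<partial>lborel)"

definition fock_space :: "real \<Rightarrow> real \<Rightarrow> (complex \<Rightarrow> complex) set" where
  "fock_space p \<alpha> = {f. f holomorphic_on UNIV \<and> fock_integral p \<alpha> f < \<infinity>}"

text \<open>The norm ||f||_{p,alpha} (meaningful when the integral is finite).\<close>
definition fock_norm :: "real \<Rightarrow> real \<Rightarrow> (complex \<Rightarrow> complex) \<Rightarrow> real" where
  "fock_norm p \<alpha> f = (p * \<alpha> / (2 * pi) * enn2real (fock_integral p \<alpha> f)) powr (1 / p)"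

definition fock_norm_inf :: "real \<Rightarrow> (complex \<Rightarrow> complex) \<Rightarrow> ereal" where
  "fock_norm_inf \<alpha> f = esssup lborel (\<lambda>z. ereal (cmod (f z) * exp (- \<alpha> * (cmod z)\<^sup>2 / 2)))"

end

theory Submission
  imports Defs "HOL-Complex_Analysis.Complex_Analysis" "HOL-Real_Asymp.Real_Asymp"
begin

lemma measurable_Complex[measurable]:
  assumes [measurable]: "f \<in> borel_measurable M" "g \<in> borel_measurable M"
  shows "(\<lambda>x. Complex (f x) (g x)) \<in> borel_measurable M"
  unfolding Complex_eq by measurable

lemma lborel_complex:
  "distr (lborel \<Otimes>\<^sub>M lborel) borel (\<lambda>(x,y). Complex x y) = (lborel :: complex measure)"
proof (rule lborel_eqI[symmetric])
  fix l u :: complex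
  assume lu: "\<And>b. b \<in> Basis \<Longrightarrow> l \<bullet> b \<le> u \<bullet> b"
  have m: "(\<lambda>(x,y). Complex x y) \<in> (lborel \<Otimes>\<^sub>M lborel) \<rightarrow>\<^sub>M (borel :: complex measure)"
    by (simp add: case_prod_beta')
  have pre: "(\<lambda>(x,y). Complex x y) -` box l u \<inter> space (lborel \<Otimes>\<^sub>M lborel) = {Re l<..<Re u} \<times> {Im l<..<Im u}"
    by (auto simp: in_box_complex_iff space_pair_measure)
  have "Re l \<le> Re u" "Im l \<le> Im u" using lu[of 1] lu[of "\<i>"] by (auto simp: Basis_complex_def inner_complex_def)
  then show "emeasure (distr (lborel \<Otimes>\<^sub>M lborel) borel (\<lambda>(x,y). Complex x y)) (box l u) = (\<Prod>b\<in>Basis. (u - l) \<bullet> b)"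
    using m by (simp add: emeasure_distr pre lborel.emeasure_pair_measure_Times Basis_complex_def inner_complex_def ennreal_mult)
qed simp

lemma nn_integral_complex:
  assumes [measurable]: "G \<in> borel_measurable borel"
  shows "(\<integral>\<^sup>+z. G z \<partial>lborel) = (\<integral>\<^sup>+y. (\<integral>\<^sup>+x. G (Complex x y) \<partial>lborel) \<partial>lborel)"
proof -
  have "(\<integral>\<^sup>+z. G z \<partial>lborel) = (\<integral>\<^sup>+z. G z \<partial>(distr (lborel \<Otimes>\<^sub>M lborel) borel (\<lambda>(x,y). Complex x y)))"
    by (simp add: lborel_complex)
  also have "\<dots> = (\<integral>\<^sup>+p. G (Complex (fst p) (snd p)) \<partial>(lborel \<Otimes>\<^sub>M lborel))"
    by (subst nn_integral_distr) (auto simp: case_prod_beta')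
  also have "\<dots> = (\<integral>\<^sup>+y. (\<integral>\<^sup>+x. G (Complex x y) \<partial>lborel) \<partial>lborel)"
    by (subst lborel_pair.nn_integral_snd[symmetric]) auto
  finally show ?thesis .
qed

lemma refl_bound:
  assumes [measurable]: "G \<in> borel_measurable borel" and c: "c = 1 \<or> c = (-1::real)"
  shows "(\<integral>\<^sup>+s. G (c * s) * indicator {1/2..1} s \<partial>lborel) \<le> (\<integral>\<^sup>+y. G y * indicator {-1..1} y \<partial>lborel)"
proof -
  have cn: "c \<noteq> 0" using c by auto
  have "(\<integral>\<^sup>+y. G y * indicator {-1..1} y \<partial>lborel) = ennreal \<bar>c\<bar> * (\<integral>\<^sup>+s. G (0 + c * s) * indicator {-1..1} (0 + c * s) \<partial>lborel)"
    by (rule nn_integral_real_affine[OF _ cn]) measurable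
  also have "\<dots> = (\<integral>\<^sup>+s. G (c * s) * indicator {-1..1} (c * s) \<partial>lborel)"
    using c by auto
  finally have eq: "(\<integral>\<^sup>+y. G y * indicator {-1..1} y \<partial>lborel) = (\<integral>\<^sup>+s. G (c * s) * indicator {-1..1} (c * s) \<partial>lborel)" .
  show ?thesis unfolding eq
    by (intro nn_integral_mono mult_left_mono) (use c in \<open>auto split: split_indicator\<close>)
qed

lemma int01:
  fixes \<phi> :: "real \<Rightarrow> real"
  assumes "continuous_on {0..1} \<phi>" "\<And>x. x \<in> {0..1} \<Longrightarrow> 0 \<le> \<phi> x"
  shows "ennreal (integral {0..1} \<phi>) = (\<integral>\<^sup>+x. ennreal (\<phi> x) * indicator {0..1} x \<partial>lborel)"
proof -
  have "(\<phi> has_integral integral {0..1} \<phi>) {0..1}"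
    using assms(1) by (intro integrable_integral integrable_continuous_real)
  from nn_integral_has_integral_lebesgue'[OF assms(2) this] show ?thesis by simp
qed

lemma edge_bound:
  fixes h :: "complex \<Rightarrow> complex" and P :: "real \<Rightarrow> complex"
  assumes hc: "continuous_on UNIV h" and Pc: "continuous_on UNIV P"
  and s: "1/2 \<le> s" "s \<le> 1" and c: "c = 1 \<or> c = (-1::real)"
  and lp: "\<And>x. linepath a b x = P (c * (2 * s * x - s))"
  and ab: "cmod (b - a) = 2 * s"
  and far: "\<And>x. x \<in> {0..1} \<Longrightarrow> s \<le> cmod (linepath a b x - z0)"
  shows "ennreal (cmod (contour_integral (linepath a b) (\<lambda>w. h w / (w - z0))))
     \<le> 2 * (\<integral>\<^sup>+t. ennreal (cmod (h (P t))) * indicator {-1..1} t \<partial>lborel)"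
proof -
  define g where "g = (\<lambda>w. h w / (w - z0))"
  have spos: "s > 0" using s by auto
  have nz: "linepath a b x - z0 \<noteq> 0" if "x \<in> {0..1}" for x
    using far[OF that] spos by auto
  have [measurable]: "h \<in> borel_measurable borel" "P \<in> borel_measurable borel"
    using hc Pc by (auto intro: borel_measurable_continuous_onI)
  have clp: "continuous_on {0..1} (linepath a b)" by (rule continuous_on_linepath)
  have hlp: "continuous_on {0..1} (\<lambda>x. h (linepath a b x))"
    by (rule continuous_on_compose2[OF hc clp]) auto
  have cont: "continuous_on {0..1} (\<lambda>x. g (linepath a b x) * (b - a))"
    unfolding g_def using nz
    by (intro continuous_intros hlp clp) auto
  have hi: "((\<lambda>x. g (linepath a b x) * (b - a)) has_integral integral {0..1} (\<lambda>x. g (linepath a b x) * (b - a))) {0..1}"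
    using cont by (intro integrable_integral integrable_continuous_real)
  then have "(g has_contour_integral integral {0..1} (\<lambda>x. g (linepath a b x) * (b - a))) (linepath a b)"
    by (simp add: has_contour_integral_linepath)
  then have CI: "contour_integral (linepath a b) g = integral {0..1} (\<lambda>x. g (linepath a b x) * (b - a))"
    by (rule contour_integral_unique)
  have hc2: "continuous_on {0..1} (\<lambda>x. 2 * cmod (h (linepath a b x)))"
    by (intro continuous_intros hlp)
  have "cmod (contour_integral (linepath a b) g) \<le> integral {0..1} (\<lambda>x. 2 * cmod (h (linepath a b x)))"
    unfolding CI
  proof (rule integral_norm_bound_integral)
    show "(\<lambda>x. g (linepath a b x) * (b - a)) integrable_on {0..1}"
      using cont by (rule integrable_continuous_real)
    show "(\<lambda>x. 2 * cmod (h (linepath a b x))) integrable_on {0..1}"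
      using hc2 by (rule integrable_continuous_real)
    fix x :: real assume x: "x \<in> {0..1}"
    have "cmod (g (linepath a b x) * (b - a)) = cmod (h (linepath a b x)) / cmod (linepath a b x - z0) * (2 * s)"
      by (simp add: g_def norm_mult norm_divide ab)
    also have "\<dots> \<le> cmod (h (linepath a b x)) / s * (2 * s)"
      using far[OF x] spos by (intro mult_right_mono divide_left_mono) (auto intro!: mult_pos_pos)
    also have "\<dots> = 2 * cmod (h (linepath a b x))" using spos by simp
    finally show "cmod (g (linepath a b x) * (b - a)) \<le> 2 * cmod (h (linepath a b x))" .
  qed
  then have "ennreal (cmod (contour_integral (linepath a b) g)) \<le> ennreal (integral {0..1} (\<lambda>x. 2 * cmod (h (linepath a b x))))"
    by (rule ennreal_leI)
  also have "\<dots> = (\<integral>\<^sup>+x. ennreal (2 * cmod (h (linepath a b x))) * indicator {0..1} x \<partial>lborel)"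
    using hc2 by (intro int01) auto
  also have "\<dots> = 2 * (\<integral>\<^sup>+x. ennreal (cmod (h (P (c * (2 * s * x - s))))) * indicator {0..1} x \<partial>lborel)"
    by (subst nn_integral_cmult[symmetric]) (auto simp: lp ennreal_mult mult.assoc)
  finally have step1: "ennreal (cmod (contour_integral (linepath a b) g)) \<le> 2 * (\<integral>\<^sup>+x. ennreal (cmod (h (P (c * (2 * s * x - s))))) * indicator {0..1} x \<partial>lborel)" .
  define X where "X = (\<integral>\<^sup>+x. ennreal (cmod (h (P (c * (2 * s * x - s))))) * indicator {0..1} x \<partial>lborel)"
  have cs: "2 * c * s \<noteq> 0" using c spos by auto
  have "(\<integral>\<^sup>+t. ennreal (cmod (h (P t))) * indicator {-s..s} t \<partial>lborel)
      = ennreal \<bar>2 * c * s\<bar> * (\<integral>\<^sup>+x. ennreal (cmod (h (P (- c * s + 2 * c * s * x)))) * indicator {-s..s} (- c * s + 2 * c * s * x) \<partial>lborel)"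
    by (rule nn_integral_real_affine[OF _ cs]) measurable
  also have "\<dots> = ennreal (2 * s) * X"
    unfolding X_def
  proof (rule arg_cong2[where f="(*)"])
    show "ennreal \<bar>2 * c * s\<bar> = ennreal (2 * s)" using c spos by auto
    have e1: "- c * s + 2 * c * s * x = c * (2 * s * x - s)" for x by (simp add: algebra_simps)
    have e2: "indicator {-s..s} (c * (2 * s * x - s)) = (indicator {0..1} x :: ennreal)" for x
      using c spos by (auto split: split_indicator simp: algebra_simps mult_le_cancel_left1 mult_le_cancel_left2 zero_le_mult_iff)
    show "(\<integral>\<^sup>+x. ennreal (cmod (h (P (- c * s + 2 * c * s * x)))) * indicator {-s..s} (- c * s + 2 * c * s * x) \<partial>lborel) =
          (\<integral>\<^sup>+x. ennreal (cmod (h (P (c * (2 * s * x - s))))) * indicator {0..1} x \<partial>lborel)"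
      by (simp only: e1 e2)
  qed
  finally have eqX: "(\<integral>\<^sup>+t. ennreal (cmod (h (P t))) * indicator {-s..s} t \<partial>lborel) = ennreal (2 * s) * X" .
  have "X \<le> ennreal (2 * s) * X"
  proof -
    have "X = ennreal 1 * X" by simp
    also have "\<dots> \<le> ennreal (2 * s) * X" using s by (intro mult_right_mono ennreal_leI) auto
    finally show ?thesis .
  qed
  also have "\<dots> \<le> (\<integral>\<^sup>+t. ennreal (cmod (h (P t))) * indicator {-1..1} t \<partial>lborel)"
    unfolding eqX[symmetric] using s
    by (intro nn_integral_mono mult_left_mono) (auto split: split_indicator)
  finally have "X \<le> (\<integral>\<^sup>+t. ennreal (cmod (h (P t))) * indicator {-1..1} t \<partial>lborel)" .
  then show ?thesis using step1 unfolding X_def g_def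
    by (meson dual_order.trans mult_left_mono zero_le)
qed

lemma square_bound:
  fixes h :: "complex \<Rightarrow> complex"
  assumes hol: "h holomorphic_on UNIV" and s: "1/2 \<le> s" "s \<le> 1"
  shows "ennreal (2 * pi * cmod (h z0)) \<le> 2 * (
      (\<integral>\<^sup>+t. ennreal (cmod (h (z0 + Complex t (-s)))) * indicator {-1..1} t \<partial>lborel)
    + (\<integral>\<^sup>+t. ennreal (cmod (h (z0 + Complex s t))) * indicator {-1..1} t \<partial>lborel)
    + (\<integral>\<^sup>+t. ennreal (cmod (h (z0 + Complex t s))) * indicator {-1..1} t \<partial>lborel)
    + (\<integral>\<^sup>+t. ennreal (cmod (h (z0 + Complex (-s) t))) * indicator {-1..1} t \<partial>lborel))"
proof -
  have spos: "s > 0" using s by auto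
  have hc: "continuous_on UNIV h" using hol holomorphic_on_imp_continuous_on by blast
  define a1 where "a1 = z0 + Complex (-s) (-s)"
  define a2 where "a2 = z0 + Complex s (-s)"
  define a3 where "a3 = z0 + Complex s s"
  define a4 where "a4 = z0 + Complex (-s) s"
  define g where "g = (\<lambda>w. h w / (w - z0))"
  have rp: "rectpath a1 a3 = linepath a1 a2 +++ linepath a2 a3 +++ linepath a3 a4 +++ linepath a4 a1"
  proof -
    have "Complex (Re a3) (Im a1) = a2" "Complex (Re a1) (Im a3) = a4"
      by (simp_all add: a1_def a2_def a3_def a4_def complex_eq_iff)
    then show ?thesis by (simp add: rectpath_def Let_def)
  qed
  have box: "z0 \<in> box a1 a3" using spos by (auto simp: a1_def a3_def in_box_complex_iff)
  have le: "Re a1 \<le> Re a3" "Im a1 \<le> Im a3" using spos by (auto simp: a1_def a3_def)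
  have pim: "path_image (rectpath a1 a3) \<subseteq> UNIV - {z0}"
    using box le by (auto simp: path_image_rectpath_cbox_minus_box)
  have "(g has_contour_integral (2*pi * \<i> * winding_number (rectpath a1 a3) z0 * h z0)) (rectpath a1 a3)"
    unfolding g_def by (rule Cauchy_integral_formula_convex_simple[OF convex_UNIV hol]) (use pim in auto)
  then have "contour_integral (rectpath a1 a3) g = 2*pi * \<i> * h z0"
    using winding_number_rectpath[OF box] contour_integral_unique by simp
  have gc: "continuous_on (UNIV - {z0}) g"
    unfolding g_def by (intro continuous_intros continuous_on_subset[OF hc]) auto
  have lpi: "\<And>a b. \<forall>x\<in>{0..1}. linepath a b x \<noteq> z0 \<Longrightarrow> g contour_integrable_on linepath a b"
    by (rule contour_integrable_continuous_linepath, rule continuous_on_subset[OF gc])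
       (auto simp: path_image_linepath[symmetric] path_image_def)
  have far: "s \<le> cmod (w - z0)" if "\<bar>Re (w - z0)\<bar> = s \<or> \<bar>Im (w - z0)\<bar> = s" for w
    using that abs_Re_le_cmod abs_Im_le_cmod by metis
  have l1: "linepath a1 a2 x = (\<lambda>t. z0 + Complex t (-s)) (1 * (2 * s * x - s))" for x
    by (simp add: linepath_def a1_def a2_def complex_eq_iff algebra_simps)
  have l2: "linepath a2 a3 x = (\<lambda>t. z0 + Complex s t) (1 * (2 * s * x - s))" for x
    by (simp add: linepath_def a3_def a2_def complex_eq_iff algebra_simps)
  have l3: "linepath a3 a4 x = (\<lambda>t. z0 + Complex t s) ((-1) * (2 * s * x - s))" for x
    by (simp add: linepath_def a3_def a4_def complex_eq_iff algebra_simps)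
  have l4: "linepath a4 a1 x = (\<lambda>t. z0 + Complex (-s) t) ((-1) * (2 * s * x - s))" for x
    by (simp add: linepath_def a1_def a4_def complex_eq_iff algebra_simps)
  have fa1: "s \<le> cmod (linepath a1 a2 x - z0)" for x by (rule far) (simp add: l1 spos abs_of_pos)
  have fa2: "s \<le> cmod (linepath a2 a3 x - z0)" for x by (rule far) (simp add: l2 spos abs_of_pos)
  have fa3: "s \<le> cmod (linepath a3 a4 x - z0)" for x by (rule far) (simp add: l3 spos abs_of_pos)
  have fa4: "s \<le> cmod (linepath a4 a1 x - z0)" for x by (rule far) (simp add: l4 spos abs_of_pos)
  have ne: "\<And>a b. (\<And>x. s \<le> cmod (linepath a b x - z0)) \<Longrightarrow> \<forall>x\<in>{0..1}. linepath a b x \<noteq> z0"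
    using spos by (metis diff_self norm_zero not_le)
  have i1: "g contour_integrable_on linepath a1 a2" by (rule lpi, rule ne, rule fa1)
  have i2: "g contour_integrable_on linepath a2 a3" by (rule lpi, rule ne, rule fa2)
  have i3: "g contour_integrable_on linepath a3 a4" by (rule lpi, rule ne, rule fa3)
  have i4: "g contour_integrable_on linepath a4 a1" by (rule lpi, rule ne, rule fa4)
  have "contour_integral (rectpath a1 a3) g = contour_integral (linepath a1 a2) g + contour_integral (linepath a2 a3) g
      + contour_integral (linepath a3 a4) g + contour_integral (linepath a4 a1) g"
    unfolding rp using i1 i2 i3 i4 by simp
  then have "2 * pi * cmod (h z0) = cmod (contour_integral (linepath a1 a2) g + contour_integral (linepath a2 a3) g
      + contour_integral (linepath a3 a4) g + contour_integral (linepath a4 a1) g)"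
  proof -
    assume "contour_integral (rectpath a1 a3) g = contour_integral (linepath a1 a2) g + contour_integral (linepath a2 a3) g
      + contour_integral (linepath a3 a4) g + contour_integral (linepath a4 a1) g"
    then have "contour_integral (linepath a1 a2) g + contour_integral (linepath a2 a3) g
      + contour_integral (linepath a3 a4) g + contour_integral (linepath a4 a1) g = 2*pi * \<i> * h z0"
      using \<open>contour_integral (rectpath a1 a3) g = 2*pi * \<i> * h z0\<close> by simp
    then show ?thesis by (simp add: norm_mult)
  qed
  also have "\<dots> \<le> cmod (contour_integral (linepath a1 a2) g) + cmod (contour_integral (linepath a2 a3) g)
      + cmod (contour_integral (linepath a3 a4) g) + cmod (contour_integral (linepath a4 a1) g)"
    by (intro norm_triangle_le add_mono order_refl)
  finally have "ennreal (2 * pi * cmod (h z0)) \<le> ennreal (cmod (contour_integral (linepath a1 a2) g) + cmod (contour_integral (linepath a2 a3) g)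
      + cmod (contour_integral (linepath a3 a4) g) + cmod (contour_integral (linepath a4 a1) g))"
    by (rule ennreal_leI)
  also have "\<dots> = ennreal (cmod (contour_integral (linepath a1 a2) g)) + ennreal (cmod (contour_integral (linepath a2 a3) g))
      + ennreal (cmod (contour_integral (linepath a3 a4) g)) + ennreal (cmod (contour_integral (linepath a4 a1) g))"
    by (simp add: ennreal_plus)
  also have "\<dots> \<le> 2 * (\<integral>\<^sup>+t. ennreal (cmod (h (z0 + Complex t (-s)))) * indicator {-1..1} t \<partial>lborel)
    + 2 * (\<integral>\<^sup>+t. ennreal (cmod (h (z0 + Complex s t))) * indicator {-1..1} t \<partial>lborel)
    + 2 * (\<integral>\<^sup>+t. ennreal (cmod (h (z0 + Complex t s))) * indicator {-1..1} t \<partial>lborel)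
    + 2 * (\<integral>\<^sup>+t. ennreal (cmod (h (z0 + Complex (-s) t))) * indicator {-1..1} t \<partial>lborel)"
  proof (intro add_mono)
    have Pc: "continuous_on UNIV (\<lambda>t. z0 + Complex t (-s))" "continuous_on UNIV (\<lambda>t. z0 + Complex s t)"
             "continuous_on UNIV (\<lambda>t. z0 + Complex t s)" "continuous_on UNIV (\<lambda>t. z0 + Complex (-s) t)"
      by (simp_all add: Complex_eq continuous_intros)
    have d: "cmod (a2 - a1) = 2 * s" "cmod (a3 - a2) = 2 * s" "cmod (a4 - a3) = 2 * s" "cmod (a1 - a4) = 2 * s"
    proof -
      have e: "(2 * s)\<^sup>2 = 4 * s\<^sup>2" by (simp add: power2_eq_square)
      have "sqrt (4 * s\<^sup>2) = sqrt ((2 * s)\<^sup>2)" by (simp only: e)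
      also have "\<dots> = 2 * s" by (subst real_sqrt_abs) (use spos in simp)
      finally have sq: "sqrt (4 * s\<^sup>2) = 2 * s" .
      show "cmod (a2 - a1) = 2 * s" "cmod (a3 - a2) = 2 * s" "cmod (a4 - a3) = 2 * s" "cmod (a1 - a4) = 2 * s"
        using sq by (simp_all add: a1_def a2_def a3_def a4_def cmod_def)
    qed
    show "ennreal (cmod (contour_integral (linepath a1 a2) g)) \<le> 2 * (\<integral>\<^sup>+t. ennreal (cmod (h (z0 + Complex t (-s)))) * indicator {-1..1} t \<partial>lborel)"
      unfolding g_def by (rule edge_bound[OF hc Pc(1) s _ l1 d(1) fa1]) simp
    show "ennreal (cmod (contour_integral (linepath a2 a3) g)) \<le> 2 * (\<integral>\<^sup>+t. ennreal (cmod (h (z0 + Complex s t))) * indicator {-1..1} t \<partial>lborel)"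
      unfolding g_def by (rule edge_bound[OF hc Pc(2) s _ l2 d(2) fa2]) simp
    show "ennreal (cmod (contour_integral (linepath a3 a4) g)) \<le> 2 * (\<integral>\<^sup>+t. ennreal (cmod (h (z0 + Complex t s))) * indicator {-1..1} t \<partial>lborel)"
      unfolding g_def by (rule edge_bound[OF hc Pc(3) s _ l3 d(3) fa3]) simp
    show "ennreal (cmod (contour_integral (linepath a4 a1) g)) \<le> 2 * (\<integral>\<^sup>+t. ennreal (cmod (h (z0 + Complex (-s) t))) * indicator {-1..1} t \<partial>lborel)"
      unfolding g_def by (rule edge_bound[OF hc Pc(4) s _ l4 d(4) fa4]) simp
  qed
  also have "\<dots> = 2 * (
      (\<integral>\<^sup>+t. ennreal (cmod (h (z0 + Complex t (-s)))) * indicator {-1..1} t \<partial>lborel)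
    + (\<integral>\<^sup>+t. ennreal (cmod (h (z0 + Complex s t))) * indicator {-1..1} t \<partial>lborel)
    + (\<integral>\<^sup>+t. ennreal (cmod (h (z0 + Complex t s))) * indicator {-1..1} t \<partial>lborel)
    + (\<integral>\<^sup>+t. ennreal (cmod (h (z0 + Complex (-s) t))) * indicator {-1..1} t \<partial>lborel))"
    by (simp add: distrib_left)
  finally show ?thesis .
qed

lemma swap_bound:
  fixes H :: "real \<Rightarrow> real \<Rightarrow> ennreal"
  assumes [measurable]: "(\<lambda>(x,y). H x y) \<in> borel_measurable (lborel \<Otimes>\<^sub>M lborel)"
    and c: "c = 1 \<or> c = (-1::real)"
  shows "(\<integral>\<^sup>+s. (\<integral>\<^sup>+t. H (c * s) t * indicator {-1..1} t \<partial>lborel) * indicator {1/2..1} s \<partial>lborel)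
       \<le> (\<integral>\<^sup>+y. (\<integral>\<^sup>+x. H x y * indicator {-1..1} x \<partial>lborel) * indicator {-1..1} y \<partial>lborel)"
proof -
  have m2[measurable]: "(\<lambda>(s,t). H (c * s) t * indicator {-1..1} t * indicator {1/2..1} s) \<in> borel_measurable (lborel \<Otimes>\<^sub>M lborel)"
  proof -
    have "(\<lambda>p. H (c * fst p) (snd p)) \<in> borel_measurable (lborel \<Otimes>\<^sub>M lborel)"
      using measurable_compose[OF _ assms(1), of "\<lambda>p. (c * fst p, snd p)"] by (simp add: case_prod_beta')
    then show ?thesis by (simp add: case_prod_beta')
  qed
  have "(\<integral>\<^sup>+s. (\<integral>\<^sup>+t. H (c * s) t * indicator {-1..1} t \<partial>lborel) * indicator {1/2..1} s \<partial>lborel)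
      = (\<integral>\<^sup>+s. (\<integral>\<^sup>+t. H (c * s) t * indicator {-1..1} t * indicator {1/2..1} s \<partial>lborel) \<partial>lborel)"
    by (simp add: nn_integral_multc)
  also have "\<dots> = (\<integral>\<^sup>+t. (\<integral>\<^sup>+s. H (c * s) t * indicator {-1..1} t * indicator {1/2..1} s \<partial>lborel) \<partial>lborel)"
    using lborel_pair.Fubini'[OF m2] by simp
  also have "\<dots> = (\<integral>\<^sup>+t. (\<integral>\<^sup>+s. H (c * s) t * indicator {1/2..1} s \<partial>lborel) * indicator {-1..1} t \<partial>lborel)"
  proof (intro nn_integral_cong)
    fix t
    have [measurable]: "(\<lambda>x. H x t) \<in> borel_measurable borel"
      using measurable_Pair1[OF assms(1), of t] by simp
    have "(\<integral>\<^sup>+s. H (c * s) t * indicator {1/2..1} s \<partial>lborel) * indicator {-1..1} t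
       = (\<integral>\<^sup>+s. H (c * s) t * indicator {1/2..1} s * indicator {-1..1} t \<partial>lborel)"
      by (rule nn_integral_multc[symmetric]) measurable
    then show "(\<integral>\<^sup>+s. H (c * s) t * indicator {-1..1} t * indicator {1/2..1} s \<partial>lborel) =
      (\<integral>\<^sup>+s. H (c * s) t * indicator {1/2..1} s \<partial>lborel) * indicator {-1..1} t"
      by (simp add: mult_ac)
  qed
  also have "\<dots> \<le> (\<integral>\<^sup>+t. (\<integral>\<^sup>+x. H x t * indicator {-1..1} x \<partial>lborel) * indicator {-1..1} t \<partial>lborel)"
  proof (rule nn_integral_mono, rule mult_right_mono)
    fix t
    have [measurable]: "(\<lambda>x. H x t) \<in> borel_measurable borel"
      using measurable_Pair1[OF assms(1), of t] by simp
    show "(\<integral>\<^sup>+s. H (c * s) t * indicator {1/2..1} s \<partial>lborel) \<le> (\<integral>\<^sup>+x. H x t * indicator {-1..1} x \<partial>lborel)"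
      by (rule refl_bound[OF _ c]) measurable
  qed auto
  finally show ?thesis .
qed

lemma half_int: "(\<integral>\<^sup>+s. ennreal (2 * a) * indicator {1/2..1::real} s \<partial>lborel) = ennreal (a::real)"
proof -
  have "inverse (ennreal 2) = ennreal (inverse 2)" by (rule inverse_ennreal) simp
  then have i2: "inverse (2::ennreal) = ennreal (1/2)" by (simp only: ennreal_numeral inverse_eq_divide)
  have "ennreal (2 * a) * ennreal (1/2) = ennreal (2 * a * (1/2))"
      by (rule ennreal_mult''[symmetric]) simp
  then have e: "ennreal (2 * a) * ennreal (1/2) = ennreal a" by simp
  have "(\<integral>\<^sup>+s. ennreal (2 * a) * indicator {1/2..1::real} s \<partial>lborel) = ennreal (2 * a) * inverse 2"
    by (subst nn_integral_cmult_indicator) simp_all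
  then show ?thesis by (simp only: i2 e)
qed

lemma eight: "2 * (Q + Q + Q + Q) = 8 * (Q::ennreal)"
proof -
  have e: "(8::ennreal) = 2 * (1+1+1+1)" by simp
  show ?thesis by (subst e) (simp only: mult.assoc distrib_right mult_1)
qed

lemma area_bound:
  fixes h :: "complex \<Rightarrow> complex"
  assumes hol: "h holomorphic_on UNIV"
  shows "ennreal (pi * cmod (h z0)) \<le> 8 * (\<integral>\<^sup>+y. (\<integral>\<^sup>+x. ennreal (cmod (h (z0 + Complex x y))) * indicator {-1..1} x \<partial>lborel) * indicator {-1..1} y \<partial>lborel)"
proof -
  have hc: "continuous_on UNIV h" using hol holomorphic_on_imp_continuous_on by blast
  have [measurable]: "h \<in> borel_measurable borel" using hc by (rule borel_measurable_continuous_onI)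
  define Q where "Q = (\<integral>\<^sup>+y. (\<integral>\<^sup>+x. ennreal (cmod (h (z0 + Complex x y))) * indicator {-1..1} x \<partial>lborel) * indicator {-1..1} y \<partial>lborel)"
  define J1 where "J1 s = (\<integral>\<^sup>+t. ennreal (cmod (h (z0 + Complex t (-s)))) * indicator {-1..1} t \<partial>lborel)" for s
  define J2 where "J2 s = (\<integral>\<^sup>+t. ennreal (cmod (h (z0 + Complex s t))) * indicator {-1..1} t \<partial>lborel)" for s
  define J3 where "J3 s = (\<integral>\<^sup>+t. ennreal (cmod (h (z0 + Complex t s))) * indicator {-1..1} t \<partial>lborel)" for s
  define J4 where "J4 s = (\<integral>\<^sup>+t. ennreal (cmod (h (z0 + Complex (-s) t))) * indicator {-1..1} t \<partial>lborel)" for s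
  define G where "G y = (\<integral>\<^sup>+x. ennreal (cmod (h (z0 + Complex x y))) * indicator {-1..1} x \<partial>lborel)" for y
  have Hm: "(\<lambda>(x,y). ennreal (cmod (h (z0 + Complex x y)))) \<in> borel_measurable (lborel \<Otimes>\<^sub>M lborel)"
    by (simp add: case_prod_beta')
  have m1: "J1 \<in> borel_measurable lborel" unfolding J1_def
    by (rule lborel.borel_measurable_nn_integral) (simp add: case_prod_beta')
  have m2: "J2 \<in> borel_measurable lborel" unfolding J2_def
    by (rule lborel.borel_measurable_nn_integral) (simp add: case_prod_beta')
  have m3: "J3 \<in> borel_measurable lborel" unfolding J3_def
    by (rule lborel.borel_measurable_nn_integral) (simp add: case_prod_beta')
  have m4: "J4 \<in> borel_measurable lborel" unfolding J4_def
    by (rule lborel.borel_measurable_nn_integral) (simp add: case_prod_beta')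
  have m5: "G \<in> borel_measurable lborel" unfolding G_def
    by (rule lborel.borel_measurable_nn_integral) (simp add: case_prod_beta')
  have [measurable]: "J1 \<in> borel_measurable borel" "J2 \<in> borel_measurable borel"
     "J3 \<in> borel_measurable borel" "J4 \<in> borel_measurable borel" "G \<in> borel_measurable borel"
    using m1 m2 m3 m4 m5 by simp_all
  have "ennreal (pi * cmod (h z0)) = (\<integral>\<^sup>+s. ennreal (2 * pi * cmod (h z0)) * indicator {1/2..1::real} s \<partial>lborel)"
    using half_int[of "pi * cmod (h z0)"] by (simp add: mult.assoc)
  also have "\<dots> \<le> (\<integral>\<^sup>+s. 2 * (J1 s + J2 s + J3 s + J4 s) * indicator {1/2..1} s \<partial>lborel)"
  proof (rule nn_integral_mono)
    fix s :: real
    show "ennreal (2 * pi * cmod (h z0)) * indicator {1/2..1} s \<le> 2 * (J1 s + J2 s + J3 s + J4 s) * indicator {1/2..1} s"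
    proof (cases "s \<in> {1/2..1}")
      case True
      then show ?thesis using square_bound[OF hol, of s z0] by (auto simp: J1_def J2_def J3_def J4_def)
    qed simp
  qed
  also have "\<dots> = 2 * ((\<integral>\<^sup>+s. J1 s * indicator {1/2..1} s \<partial>lborel) + (\<integral>\<^sup>+s. J2 s * indicator {1/2..1} s \<partial>lborel)
     + (\<integral>\<^sup>+s. J3 s * indicator {1/2..1} s \<partial>lborel) + (\<integral>\<^sup>+s. J4 s * indicator {1/2..1} s \<partial>lborel))"
  proof -
    have "(\<integral>\<^sup>+s. 2 * (J1 s + J2 s + J3 s + J4 s) * indicator {1/2..1} s \<partial>lborel)
      = (\<integral>\<^sup>+s. 2 * (J1 s * indicator {1/2..1} s + J2 s * indicator {1/2..1} s + J3 s * indicator {1/2..1} s + J4 s * indicator {1/2..1} s) \<partial>lborel)"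
      by (intro nn_integral_cong) (simp only: distrib_right mult.assoc)
    also have "\<dots> = 2 * (\<integral>\<^sup>+s. (J1 s * indicator {1/2..1} s + J2 s * indicator {1/2..1} s + J3 s * indicator {1/2..1} s) + J4 s * indicator {1/2..1} s \<partial>lborel)"
      by (rule nn_integral_cmult) measurable
    also have "(\<integral>\<^sup>+s. (J1 s * indicator {1/2..1} s + J2 s * indicator {1/2..1} s + J3 s * indicator {1/2..1} s) + J4 s * indicator {1/2..1} s \<partial>lborel)
       = (\<integral>\<^sup>+s. (J1 s * indicator {1/2..1} s + J2 s * indicator {1/2..1} s) + J3 s * indicator {1/2..1} s \<partial>lborel) + (\<integral>\<^sup>+s. J4 s * indicator {1/2..1} s \<partial>lborel)"
      by (rule nn_integral_add) measurable
    also have "(\<integral>\<^sup>+s. (J1 s * indicator {1/2..1} s + J2 s * indicator {1/2..1} s) + J3 s * indicator {1/2..1} s \<partial>lborel)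
       = (\<integral>\<^sup>+s. J1 s * indicator {1/2..1} s + J2 s * indicator {1/2..1} s \<partial>lborel) + (\<integral>\<^sup>+s. J3 s * indicator {1/2..1} s \<partial>lborel)"
      by (rule nn_integral_add) measurable
    also have "(\<integral>\<^sup>+s. J1 s * indicator {1/2..1} s + J2 s * indicator {1/2..1} s \<partial>lborel)
       = (\<integral>\<^sup>+s. J1 s * indicator {1/2..1} s \<partial>lborel) + (\<integral>\<^sup>+s. J2 s * indicator {1/2..1} s \<partial>lborel)"
      by (rule nn_integral_add) measurable
    finally show ?thesis .
  qed
  also have "\<dots> \<le> 2 * (Q + Q + Q + Q)"
  proof (intro mult_left_mono add_mono)
    have QG: "Q = (\<integral>\<^sup>+y. G y * indicator {-1..1} y \<partial>lborel)" by (simp add: Q_def G_def)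
    have J1G: "J1 s = G ((-1) * s)" for s by (simp add: J1_def G_def)
    have J3G: "J3 s = G (1 * s)" for s by (simp add: J3_def G_def)
    have Gm: "G \<in> borel_measurable borel" using m5 by simp
    show "(\<integral>\<^sup>+s. J1 s * indicator {1/2..1} s \<partial>lborel) \<le> Q"
      unfolding J1G QG by (rule refl_bound[OF Gm]) simp
    show "(\<integral>\<^sup>+s. J3 s * indicator {1/2..1} s \<partial>lborel) \<le> Q"
      unfolding J3G QG by (rule refl_bound[OF Gm]) simp
    define H where "H = (\<lambda>x y. ennreal (cmod (h (z0 + Complex x y))))"
    have Hm': "(\<lambda>(x,y). H x y) \<in> borel_measurable (lborel \<Otimes>\<^sub>M lborel)" using Hm by (simp add: H_def)
    have QH: "Q = (\<integral>\<^sup>+y. (\<integral>\<^sup>+x. H x y * indicator {-1..1} x \<partial>lborel) * indicator {-1..1} y \<partial>lborel)"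
      by (simp add: Q_def H_def)
    have J2H: "J2 s = (\<integral>\<^sup>+t. H (1 * s) t * indicator {-1..1} t \<partial>lborel)" for s by (simp add: J2_def H_def)
    have J4H: "J4 s = (\<integral>\<^sup>+t. H ((-1) * s) t * indicator {-1..1} t \<partial>lborel)" for s by (simp add: J4_def H_def)
    show "(\<integral>\<^sup>+s. J2 s * indicator {1/2..1} s \<partial>lborel) \<le> Q"
      unfolding J2H QH by (rule swap_bound[OF Hm']) simp
    show "(\<integral>\<^sup>+s. J4 s * indicator {1/2..1} s \<partial>lborel) \<le> Q"
      unfolding J4H QH by (rule swap_bound[OF Hm']) simp
  qed auto
  also have "\<dots> = 8 * Q"
    by (rule eight)
  finally show ?thesis unfolding Q_def .
qed

lemma nn_integral_translate_complex:
  assumes [measurable]: "G \<in> borel_measurable borel"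
  shows "(\<integral>\<^sup>+z. G (z0 + z) \<partial>lborel) = (\<integral>\<^sup>+z. G z \<partial>(lborel :: complex measure))"
proof -
  have "(\<integral>\<^sup>+z. G z \<partial>(lborel :: complex measure)) = (\<integral>\<^sup>+z. G z \<partial>(distr lborel borel ((+) z0)))"
    by (simp add: lborel_distr_plus)
  also have "\<dots> = (\<integral>\<^sup>+z. G (z0 + z) \<partial>lborel)"
    by (subst nn_integral_distr) auto
  finally show ?thesis by simp
qed

lemma square_measure: "(\<integral>\<^sup>+y. (\<integral>\<^sup>+x. indicator {-1..1::real} x * indicator {-1..1::real} y \<partial>lborel) \<partial>lborel) = (4::ennreal)"
proof -
  have "(\<integral>\<^sup>+y. (\<integral>\<^sup>+x. indicator {-1..1::real} x * indicator {-1..1::real} y \<partial>lborel) \<partial>lborel)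
      = (\<integral>\<^sup>+y. 2 * indicator {-1..1::real} y \<partial>lborel)"
    by (intro nn_integral_cong) (simp add: nn_integral_multc)
  also have "\<dots> = 4" by (simp add: nn_integral_cmult)
  finally show ?thesis .
qed

lemma F_bounded:
  fixes f :: "complex \<Rightarrow> complex" and \<alpha> p0 :: real
  assumes \<alpha>: "\<alpha> > 0" and hol: "f holomorphic_on UNIV" and p0: "p0 \<ge> 1"
  and I0: "(\<integral>\<^sup>+z. ennreal ((cmod (f z) * exp (- \<alpha> * (cmod z)\<^sup>2 / 2)) powr p0) \<partial>lborel) < \<infinity>"
  shows "\<exists>B. \<forall>z. cmod (f z) * exp (- \<alpha> * (cmod z)\<^sup>2 / 2) \<le> B"
proof -
  define F where "F z = cmod (f z) * exp (- \<alpha> * (cmod z)\<^sup>2 / 2)" for z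
  define I where "I = (\<integral>\<^sup>+z. ennreal ((F z) powr p0) \<partial>lborel)"
  have Ifin: "I < \<infinity>" using I0 by (simp add: I_def F_def)
  have fc: "continuous_on UNIV f" using hol holomorphic_on_imp_continuous_on by blast
  have [measurable]: "f \<in> borel_measurable borel" using fc by (rule borel_measurable_continuous_onI)
  have Fm[measurable]: "F \<in> borel_measurable borel" unfolding F_def by measurable
  define K where "K = 8 * ennreal (exp \<alpha>) * (4 + I)"
  have Kfin: "K < \<infinity>" using Ifin by (simp add: K_def ennreal_mult_less_top)
  have main: "ennreal (pi * F z0) \<le> K" for z0
  proof -
    define h where "h w = f w * exp (complex_of_real (\<alpha> * (cmod z0)\<^sup>2 / 2) - complex_of_real \<alpha> * cnj z0 * w)" for w
    have hhol: "h holomorphic_on UNIV" unfolding h_def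
      by (intro holomorphic_intros hol)
    have hx: "cmod (h (z0 + Complex x y)) = F (z0 + Complex x y) * exp (\<alpha> * (x\<^sup>2 + y\<^sup>2) / 2)" for x y
    proof -
      have "cmod (h (z0 + Complex x y)) = cmod (f (z0 + Complex x y)) *
          exp (\<alpha> * (cmod z0)\<^sup>2 / 2 - \<alpha> * (Re z0 * (Re z0 + x) + Im z0 * (Im z0 + y)))"
        by (simp add: h_def norm_mult norm_exp_eq_Re algebra_simps)
      also have "(\<alpha> * (cmod z0)\<^sup>2 / 2 - \<alpha> * (Re z0 * (Re z0 + x) + Im z0 * (Im z0 + y)))
          = - \<alpha> * (cmod (z0 + Complex x y))\<^sup>2 / 2 + \<alpha> * (x\<^sup>2 + y\<^sup>2) / 2"
      proof -
        have c1: "(cmod z0)\<^sup>2 = (Re z0)\<^sup>2 + (Im z0)\<^sup>2" by (rule cmod_power2)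
        have c2: "(cmod (z0 + Complex x y))\<^sup>2 = (Re z0 + x)\<^sup>2 + (Im z0 + y)\<^sup>2" by (simp add: cmod_power2)
        show ?thesis unfolding c1 c2 by (simp add: power2_eq_square field_simps)
      qed
      finally show ?thesis by (simp add: F_def exp_add[symmetric])
    qed
    have h0: "cmod (h z0) = F z0" using hx[of 0 0] by (simp add: zero_complex.ctr[symmetric])
    have hb: "ennreal (cmod (h (z0 + Complex x y))) * indicator {-1..1} x * indicator {-1..1} y
        \<le> ennreal (exp \<alpha>) * (indicator {-1..1::real} x * indicator {-1..1::real} y + ennreal ((F (z0 + Complex x y)) powr p0))" for x y
    proof (cases "x \<in> {-1..1} \<and> y \<in> {-1..1}")
      case True
      define v where "v = F (z0 + Complex x y)"
      have v0: "v \<ge> 0" by (simp add: v_def F_def)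
      have "x\<^sup>2 \<le> 1" "y\<^sup>2 \<le> 1" using True by (auto simp: abs_le_square_iff[symmetric] intro: abs_square_le_1[THEN iffD2])
      then have "\<alpha> * x\<^sup>2 \<le> \<alpha> * 1" "\<alpha> * y\<^sup>2 \<le> \<alpha> * 1" using \<alpha> by (intro mult_left_mono; simp)+
      then have "\<alpha> * (x\<^sup>2 + y\<^sup>2) / 2 \<le> \<alpha>" by (simp add: field_simps)
      then have e: "exp (\<alpha> * (x\<^sup>2 + y\<^sup>2) / 2) \<le> exp \<alpha>" by simp
      have vp: "v \<le> 1 + v powr p0"
      proof (cases "v \<le> 1")
        case False
        then have "v = v powr 1" by simp
        also have "\<dots> \<le> v powr p0" using False p0 by (intro powr_mono) auto
        finally show ?thesis by simp
      qed (use v0 in \<open>simp add: add_increasing2\<close>)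
      have "cmod (h (z0 + Complex x y)) \<le> (1 + v powr p0) * exp \<alpha>"
        unfolding hx v_def[symmetric] using e vp v0 by (intro mult_mono) auto
      then have "cmod (h (z0 + Complex x y)) \<le> exp \<alpha> * (1 + v powr p0)" by (simp add: mult.commute)
      then have "ennreal (cmod (h (z0 + Complex x y))) \<le> ennreal (exp \<alpha> * (1 + v powr p0))"
        by (rule ennreal_leI)
      also have "\<dots> = ennreal (exp \<alpha>) * ennreal (1 + v powr p0)"
        by (rule ennreal_mult) auto
      also have "ennreal (1 + v powr p0) = 1 + ennreal (v powr p0)"
        by (subst ennreal_plus) auto
      finally have "ennreal (cmod (h (z0 + Complex x y))) \<le> ennreal (exp \<alpha>) * (1 + ennreal (v powr p0))" .
      then show ?thesis using True by (simp add: v_def)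
    qed (auto split: split_indicator)
    have hm[measurable]: "h \<in> borel_measurable borel"
      using hhol holomorphic_on_imp_continuous_on borel_measurable_continuous_onI by blast
    have "ennreal (pi * F z0) \<le> 8 * (\<integral>\<^sup>+y. (\<integral>\<^sup>+x. ennreal (cmod (h (z0 + Complex x y))) * indicator {-1..1} x \<partial>lborel) * indicator {-1..1} y \<partial>lborel)"
      using area_bound[OF hhol, of z0] h0 by simp
    also have "(\<integral>\<^sup>+y. (\<integral>\<^sup>+x. ennreal (cmod (h (z0 + Complex x y))) * indicator {-1..1} x \<partial>lborel) * indicator {-1..1} y \<partial>lborel)
      = (\<integral>\<^sup>+y. (\<integral>\<^sup>+x. ennreal (cmod (h (z0 + Complex x y))) * indicator {-1..1} x * indicator {-1..1} y \<partial>lborel) \<partial>lborel)"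
      by (intro nn_integral_cong) (rule nn_integral_multc[symmetric], measurable)
    also have "\<dots> \<le> (\<integral>\<^sup>+y. (\<integral>\<^sup>+x. ennreal (exp \<alpha>) * (indicator {-1..1::real} x * indicator {-1..1::real} y + ennreal ((F (z0 + Complex x y)) powr p0)) \<partial>lborel) \<partial>lborel)"
      by (intro nn_integral_mono hb)
    also have "\<dots> = ennreal (exp \<alpha>) * (\<integral>\<^sup>+y. (\<integral>\<^sup>+x. indicator {-1..1::real} x * indicator {-1..1::real} y + ennreal ((F (z0 + Complex x y)) powr p0) \<partial>lborel) \<partial>lborel)"
      by (simp add: nn_integral_cmult)
    also have "(\<integral>\<^sup>+y. (\<integral>\<^sup>+x. indicator {-1..1::real} x * indicator {-1..1::real} y + ennreal ((F (z0 + Complex x y)) powr p0) \<partial>lborel) \<partial>lborel)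
       = (\<integral>\<^sup>+y. (\<integral>\<^sup>+x. indicator {-1..1::real} x * indicator {-1..1::real} y \<partial>lborel) + (\<integral>\<^sup>+x. ennreal ((F (z0 + Complex x y)) powr p0) \<partial>lborel) \<partial>lborel)"
      by (intro nn_integral_cong nn_integral_add) measurable
    also have "\<dots> = (\<integral>\<^sup>+y. (\<integral>\<^sup>+x. indicator {-1..1::real} x * indicator {-1..1::real} y \<partial>lborel) \<partial>lborel) + (\<integral>\<^sup>+y. (\<integral>\<^sup>+x. ennreal ((F (z0 + Complex x y)) powr p0) \<partial>lborel) \<partial>lborel)"
      by (rule nn_integral_add) measurable
    also have "(\<integral>\<^sup>+y. (\<integral>\<^sup>+x. ennreal ((F (z0 + Complex x y)) powr p0) \<partial>lborel) \<partial>lborel) = (\<integral>\<^sup>+z. ennreal ((F (z0 + z)) powr p0) \<partial>lborel)"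
      by (rule nn_integral_complex[symmetric]) measurable
    also have "\<dots> = I" unfolding I_def by (rule nn_integral_translate_complex) measurable
    finally show ?thesis by (simp add: square_measure K_def mult.assoc mult_left_mono)
  qed
  define B where "B = enn2real K / pi"
  have "F z \<le> B" for z
  proof -
    have "pi * F z = enn2real (ennreal (pi * F z))" by (simp add: F_def)
    also have "\<dots> \<le> enn2real K" using main[of z] Kfin by (intro enn2real_mono) auto
    finally show ?thesis by (simp add: B_def field_simps)
  qed
  then show ?thesis unfolding F_def by blast
qed

lemma lim_pow_inv:
  fixes K :: real assumes "K > 0"
  shows "((\<lambda>p. (p * K) powr (1 / p)) \<longlongrightarrow> 1) at_top"
  using assms by real_asymp

theorem lemma2p4:
  fixes \<alpha> :: real and f :: "complex \<Rightarrow> complex"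
  assumes "\<alpha> > 0"
    and "f holomorphic_on UNIV"
    and "f \<in> (\<Union>p\<in>{1..}. fock_space p \<alpha>)"
  shows "((\<lambda>p. ereal (fock_norm p \<alpha> f)) \<longlongrightarrow> fock_norm_inf \<alpha> f) at_top"
proof -
  note \<alpha> = assms(1) and hol = assms(2)
  obtain p0 where p0: "p0 \<ge> 1" and fin0: "fock_integral p0 \<alpha> f < \<infinity>"
    using assms(3) by (auto simp: fock_space_def)
  define F where "F z = cmod (f z) * exp (- \<alpha> * (cmod z)\<^sup>2 / 2)" for z
  define I where "I p = (\<integral>\<^sup>+z. ennreal ((F z) powr p) \<partial>lborel)" for p
  have FI: "fock_integral p \<alpha> f = I p" for p by (simp add: fock_integral_def I_def F_def)
  have norm_eq: "fock_norm p \<alpha> f = (p * \<alpha> / (2 * pi) * enn2real (I p)) powr (1 / p)" for p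
    by (simp add: fock_norm_def FI)
  have I0: "I p0 < \<infinity>" using fin0 by (simp add: FI)
  have F0: "F z \<ge> 0" for z by (simp add: F_def)
  have fc: "continuous_on UNIV f" using hol holomorphic_on_imp_continuous_on by blast
  have [measurable]: "f \<in> borel_measurable borel" using fc by (rule borel_measurable_continuous_onI)
  have Fm[measurable]: "F \<in> borel_measurable borel" unfolding F_def by measurable
  obtain B where B: "\<And>z. F z \<le> B"
    using F_bounded[OF \<alpha> hol p0] I0 unfolding I_def F_def by blast
  define M where "M = fock_norm_inf \<alpha> f"
  have M_def': "M = esssup lborel (\<lambda>z. ereal (F z))" by (simp add: M_def fock_norm_inf_def F_def)
  have Fem: "(\<lambda>z. ereal (F z)) \<in> borel_measurable lborel" by measurable
  have "M \<le> ereal B" unfolding M_def' by (rule esssup_I[OF Fem]) (simp add: B)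
  moreover have "0 \<le> M"
  proof -
    have "esssup lborel (\<lambda>z::complex. 0 :: ereal) \<le> M" unfolding M_def'
      by (rule esssup_mono) (auto simp: F0)
    moreover have "esssup lborel (\<lambda>z::complex. 0 :: ereal) = 0"
      by (rule esssup_const) simp
    ultimately show ?thesis by simp
  qed
  ultimately obtain Mr where Mr: "M = ereal Mr" "0 \<le> Mr" by (cases M) auto
  have AE_le: "AE z in lborel. F z \<le> Mr"
    using esssup_AE[of "\<lambda>z. ereal (F z)" lborel] unfolding M_def'[symmetric] Mr(1) by simp
  define J0 where "J0 = enn2real (I p0)"
  have J0: "J0 \<ge> 0" by (simp add: J0_def)
  have p0pos: "p0 > 0" using p0 by simp
  have upI: "I p \<le> ennreal (Mr powr (p - p0)) * I p0" if p: "p \<ge> p0" for p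
  proof -
    have "I p \<le> (\<integral>\<^sup>+z. ennreal (Mr powr (p - p0)) * ennreal ((F z) powr p0) \<partial>lborel)"
      unfolding I_def
    proof (rule nn_integral_mono_AE)
      show "AE z in lborel. ennreal (F z powr p) \<le> ennreal (Mr powr (p - p0)) * ennreal (F z powr p0)"
        using AE_le
      proof eventually_elim
        case (elim z)
        have "F z powr p = F z powr (p - p0) * F z powr p0" by (simp add: powr_add[symmetric])
        also have "\<dots> \<le> Mr powr (p - p0) * F z powr p0"
          using elim p F0[of z] by (intro mult_right_mono powr_mono2) auto
        finally have "ennreal (F z powr p) \<le> ennreal (Mr powr (p - p0) * F z powr p0)" by (rule ennreal_leI)
        also have "\<dots> = ennreal (Mr powr (p - p0)) * ennreal (F z powr p0)" by (rule ennreal_mult) auto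
        finally show ?case .
      qed
    qed
    also have "\<dots> = ennreal (Mr powr (p - p0)) * I p0"
      unfolding I_def by (rule nn_integral_cmult) measurable
    finally show ?thesis .
  qed
  have Ifin: "I p < \<infinity>" if "p \<ge> p0" for p
  proof -
    have "ennreal (Mr powr (p - p0)) * I p0 < \<infinity>" using I0 by (simp add: ennreal_mult_less_top)
    then show ?thesis using upI[OF that] by (rule le_less_trans[rotated])
  qed
  define K where "K = \<alpha> * J0 / (2 * pi) + 1"
  have Kpos: "K > 0" using \<alpha> J0 by (simp add: K_def add_nonneg_pos)
  define V where "V p = (p * K) powr (1 / p) * Mr powr ((p - p0) / p)" for p
  have upper: "fock_norm p \<alpha> f \<le> V p" if p: "p \<ge> p0" for p
  proof -
    have ppos: "p > 0" using p p0 by simp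
    have "enn2real (I p) \<le> enn2real (ennreal (Mr powr (p - p0)) * I p0)"
      using upI[OF p] I0 by (intro enn2real_mono) (auto simp: ennreal_mult_less_top)
    also have "\<dots> = Mr powr (p - p0) * J0" by (simp add: J0_def enn2real_mult)
    finally have e: "enn2real (I p) \<le> Mr powr (p - p0) * J0" .
    have "p * \<alpha> / (2 * pi) * enn2real (I p) \<le> p * \<alpha> / (2 * pi) * (Mr powr (p - p0) * J0)"
      using e ppos \<alpha> by (intro mult_left_mono) auto
    also have "\<dots> = p * (Mr powr (p - p0)) * (\<alpha> * J0 / (2 * pi))" by (simp add: field_simps)
    also have "\<dots> \<le> p * (Mr powr (p - p0)) * K"
      unfolding K_def using ppos by (intro mult_left_mono) auto
    finally have le1: "p * \<alpha> / (2 * pi) * enn2real (I p) \<le> (p * K) * Mr powr (p - p0)" by (simp add: mult_ac)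
    have "fock_norm p \<alpha> f \<le> ((p * K) * Mr powr (p - p0)) powr (1 / p)"
      unfolding norm_eq using le1 ppos \<alpha> by (intro powr_mono2) auto
    also have "\<dots> = (p * K) powr (1 / p) * (Mr powr (p - p0)) powr (1 / p)"
      using ppos Kpos by (auto intro!: powr_mult)
    also have "\<dots> = V p" by (simp add: V_def powr_powr)
    finally show ?thesis .
  qed
  have Vlim: "(V \<longlongrightarrow> Mr) at_top"
  proof (cases "Mr = 0")
    case True
    have "V = (\<lambda>p. 0)" by (rule ext) (simp add: V_def True)
    then show ?thesis using True by simp
  next
    case False
    then have Mpos: "Mr > 0" using Mr by simp
    have "((\<lambda>p. (p - p0) / p) \<longlongrightarrow> 1) at_top" by real_asymp
    then have "((\<lambda>p. Mr powr ((p - p0) / p)) \<longlongrightarrow> Mr powr 1) at_top"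
      using Mpos by (intro tendsto_intros) auto
    then have "(V \<longlongrightarrow> 1 * Mr) at_top"
      unfolding V_def using Mpos by (intro tendsto_mult lim_pow_inv Kpos) auto
    then show ?thesis by simp
  qed
  have lower: "\<exists>L. (L \<longlongrightarrow> c) at_top \<and> (\<forall>p\<ge>p0. L p \<le> fock_norm p \<alpha> f)" if c: "0 < c" "c < Mr" for c
  proof -
    define S where "S = {z. c < F z}"
    have Sm[measurable]: "S \<in> sets lborel" unfolding S_def by measurable
    have "ereal c < M" using c Mr by simp
    then have mpos: "emeasure lborel S > 0"
      using esssup_pos_measure[OF Fem, of c] unfolding M_def'[symmetric] by (simp add: S_def)
    have lowI: "ennreal (c powr p) * emeasure lborel S \<le> I p" if "p > 0" for p
    proof -
      have "ennreal (c powr p) * emeasure lborel S = (\<integral>\<^sup>+z. ennreal (c powr p) * indicator S z \<partial>lborel)"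
        using Sm by (simp add: nn_integral_cmult_indicator)
      also have "\<dots> \<le> I p" unfolding I_def
      proof (rule nn_integral_mono)
        fix z show "ennreal (c powr p) * indicator S z \<le> ennreal (F z powr p)"
        proof (cases "z \<in> S")
          case True
          then have "c powr p \<le> F z powr p" using c that by (intro powr_mono2) (auto simp: S_def)
          then show ?thesis using True by (simp add: ennreal_leI)
        qed simp
      qed
      finally show ?thesis .
    qed
    have mfin: "emeasure lborel S < \<infinity>"
    proof -
      have cz: "ennreal (c powr p0) \<noteq> 0" using c by simp
      have "ennreal (c powr p0) * emeasure lborel S < \<infinity>" using lowI[OF p0pos] I0 by (rule le_less_trans)
      then show ?thesis using cz by (auto simp: ennreal_mult_less_top)
    qed
    define mr where "mr = enn2real (emeasure lborel S)"
    have mr: "mr > 0" using mpos mfin by (simp add: mr_def enn2real_positive_iff)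
    define Lc where "Lc = \<alpha> * mr / (2 * pi)"
    have Lcpos: "Lc > 0" using \<alpha> mr by (simp add: Lc_def)
    define L where "L p = c * (p * Lc) powr (1 / p)" for p
    have "(L \<longlongrightarrow> c * 1) at_top" unfolding L_def by (intro tendsto_mult tendsto_const lim_pow_inv Lcpos)
    then have Llim: "(L \<longlongrightarrow> c) at_top" by simp
    have "L p \<le> fock_norm p \<alpha> f" if p: "p \<ge> p0" for p
    proof -
      have ppos: "p > 0" using p p0 by simp
      have "c powr p * mr = enn2real (ennreal (c powr p) * emeasure lborel S)"
        by (simp add: mr_def enn2real_mult)
      also have "\<dots> \<le> enn2real (I p)" using lowI[OF ppos] Ifin[OF p] by (intro enn2real_mono) auto
      finally have e: "c powr p * mr \<le> enn2real (I p)" .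
      have "L p = (c powr p) powr (1 / p) * (p * Lc) powr (1 / p)"
        using ppos c by (simp add: L_def powr_powr)
      also have "\<dots> = (c powr p * (p * Lc)) powr (1 / p)"
        using ppos Lcpos c by (simp add: powr_mult)
      also have "c powr p * (p * Lc) = p * \<alpha> / (2 * pi) * (c powr p * mr)" by (simp add: Lc_def field_simps)
      also have "(p * \<alpha> / (2 * pi) * (c powr p * mr)) powr (1 / p) \<le> (p * \<alpha> / (2 * pi) * enn2real (I p)) powr (1 / p)"
        using e ppos \<alpha> mr c by (intro powr_mono2 mult_left_mono) auto
      finally show ?thesis unfolding norm_eq .
    qed
    then show ?thesis using Llim by blast
  qed
  have nonneg: "fock_norm p \<alpha> f \<ge> 0" for p by (simp add: fock_norm_def)
  have "((\<lambda>p. fock_norm p \<alpha> f) \<longlongrightarrow> Mr) at_top"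
  proof (rule order_tendstoI)
    fix a assume a: "Mr < a"
    have "eventually (\<lambda>p. V p < a) at_top" using order_tendstoD(2)[OF Vlim a] .
    moreover have "eventually (\<lambda>p. p \<ge> p0) at_top" by (rule eventually_ge_at_top)
    ultimately show "eventually (\<lambda>p. fock_norm p \<alpha> f < a) at_top"
      by eventually_elim (use upper in force)
  next
    fix a assume a: "a < Mr"
    show "eventually (\<lambda>p. a < fock_norm p \<alpha> f) at_top"
    proof (cases "a < 0")
      case True
      then show ?thesis using nonneg by (intro always_eventually) (auto intro: less_le_trans)
    next
      case False
      define c where "c = (a + Mr) / 2"
      have c: "0 < c" "c < Mr" "a < c" using False a by (auto simp: c_def)
      obtain L where L: "(L \<longlongrightarrow> c) at_top" "\<forall>p\<ge>p0. L p \<le> fock_norm p \<alpha> f"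
        using lower[OF c(1,2)] by blast
      have "eventually (\<lambda>p. a < L p) at_top" using order_tendstoD(1)[OF L(1) c(3)] .
      moreover have "eventually (\<lambda>p. p \<ge> p0) at_top" by (rule eventually_ge_at_top)
      ultimately show ?thesis
        by eventually_elim (use L(2) in force)
    qed
  qed
  then have "((\<lambda>p. ereal (fock_norm p \<alpha> f)) \<longlongrightarrow> ereal Mr) at_top" by (rule tendsto_ereal)
  then show ?thesis using Mr(1) by (simp add: M_def)
qed

end
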